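(* Let $n$ be a nonnegative integer and let $x$ be a complex number such that no denominator below vanishes. Then \[ \sum_{k=0}^{n}(-1)^k\binom{n}{k} \frac{\binom{\frac{x}{2}+k}{k}^2\binom{x-\frac{1}{2}+k}{k}} {\binom{\frac{x-1}{2}+k}{k}^2\binom{x-\frac{1}{2}+n+k}{k}} \frac{1+2x+4k}{1+2x+2n+2k}H_{2k}^2(x) =\frac{1}{4}\frac{\binom{x-\frac{1}{2}+n}{n}\binom{-\frac{3}{2}+n}{n}} {\binom{\frac{x-1}{2}+n}{n}^2} \big\{\big[H_n(\tfrac{x-1}{2})-H_n(-\tfrac{3}{2})\big]^2-H_{n}^{\langle2\rangle}(-\tfrac{3}{2})\big\}, \] where $H_{2k}^2(x)$ denotes $(H_{2k}(x))^2$.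
   Context: For complex $z$ and a nonnegative integer $k$, $\binom{z}{k}=\frac{z(z-1)\cdots(z-k+1)}{k!}$ (with $\binom{z}{0}=1$). For complex $x$ and nonnegative integer $m$, $H_0(x)=0$, $H_m(x)=\sum_{j=1}^m\frac{1}{x+j}$, $H_0^{\langle2\rangle}(x)=0$ and $H_m^{\langle2\rangle}(x)=\sum_{j=1}^m\frac{1}{(x+j)^2}$ for $m\ge1$. The parameter $x$ is assumed to be such that all denominators are nonzero. *)

theory Defs
  imports Complex_Main
begin

definition H :: "nat \<Rightarrow> complex \<Rightarrow> complex" where
  "H m x = (\<Sum>j=1..m. 1 / (x + of_nat j))"

definition H2 :: "nat \<Rightarrow> complex \<Rightarrow> complex" where
  "H2 m x = (\<Sum>j=1..m. 1 / (x + of_nat j)^2)"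

end

theory Submission
  imports Defs
begin



definition PR :: "complex \<Rightarrow> complex \<Rightarrow> complex \<Rightarrow> complex" where
 "PR x n k = (-3*k+10*k^2-4*k^3-8*k^4 -2*n*k+8*n*k^2-8*n*k^3 +4*x*k -16*x*k^3 +4*x*n*k -8*x*n*k^2 + x^2*k -10*x^2*k^2 -2*x^2*n*k -2*x^3*k)"
definition PS :: "complex \<Rightarrow> complex \<Rightarrow> complex \<Rightarrow> complex" where
 "PS x n k = (-6*k+14*k^2-8*k^4-10*n*k+20*n*k^2-4*n^2*k+8*n^2*k^2+2*x*k+10*x*k^2-12*x*k^3+6*x*n*k+8*x*n*k^2+4*x*n^2*k+4*x^2*k-4*x^2*k^2+4*x^2*n*k)"
definition PW :: "complex \<Rightarrow> complex \<Rightarrow> complex \<Rightarrow> complex" where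
 "PW x n k = (-12*k+16*k^2+4*k^3-8*k^4-32*n*k+24*n*k^2+8*n*k^3-28*n^2*k+8*n^2*k^2-8*n^3*k-8*x*k+16*x*k^2-8*x*k^3-16*x*n*k+16*x*n*k^2-8*x*n^2*k)"

lemma C2:
  fixes x n k :: complex
  shows "((k+1)*(x+1+2*k)^2*(2*x+5+2*n+2*k))*(x+2*k+1)^2*((n+1)*(x+1+2*n)^4*(1+2*x+4*k)
     - (n+1-k)*(2*x+3+2*n+2*k)*(1+2*x+4*k)*(2*n-1)*(x+1+2*n)^2)
   = (x+1+2*n)^2*PR x n (k+1)*(-(n+1-k)*(2*x+1+2*k)*(x+2*k+2)^2)*(x+2*k+1)^2
     - ((k+1)*(x+1+2*k)^2*(2*x+5+2*n+2*k))*(x+2*k+1)^2*(x+1+2*n)^2*PR x n k"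
  unfolding PR_def by algebra

lemma C1:
  fixes x n k :: complex
  shows "((k+1)*(x+1+2*k)^2*(2*x+5+2*n+2*k))*(x+2*k+1)^2*((n+1-k)*(2*x+3+2*n+2*k)*(1+2*x+4*k)*(2*(x+2)*(x+1+2*n)))
   = (x+1+2*n)^2*PR x n (k+1)*(2*(-(n+1-k)*(2*x+1+2*k)*(x+2*k+2)*(2*x+4*k+3))*(x+2*k+1))
     + 2*(x+1+2*n)*PS x n (k+1)*(-(n+1-k)*(2*x+1+2*k)*(x+2*k+2)^2)*(x+2*k+1)^2
     - ((k+1)*(x+1+2*k)^2*(2*x+5+2*n+2*k))*(x+2*k+1)^2*2*(x+1+2*n)*PS x n k"
  unfolding PR_def PS_def by algebra

lemma C0:
  fixes x n k :: complex
  shows "((k+1)*(x+1+2*k)^2*(2*x+5+2*n+2*k))*(x+2*k+1)^2*((n+1-k)*(2*x+3+2*n+2*k)*(1+2*x+4*k)*(2*x+3+2*n))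
   = (x+1+2*n)^2*PR x n (k+1)*(-(n+1-k)*(2*x+1+2*k)*(2*x+4*k+3)^2)
     + 2*(x+1+2*n)*PS x n (k+1)*(-(n+1-k)*(2*x+1+2*k)*(x+2*k+2)*(2*x+4*k+3))*(x+2*k+1)
     + PW x n (k+1)*(-(n+1-k)*(2*x+1+2*k)*(x+2*k+2)^2)*(x+2*k+1)^2
     - ((k+1)*(x+1+2*k)^2*(2*x+5+2*n+2*k))*(x+2*k+1)^2*PW x n k"
  unfolding PR_def PS_def PW_def by algebra

lemma s2:
  fixes x n k h e b RA RB SA SB WA WB :: complex
  assumes he: "e * ((x+2*k+1)*(x+2*k+2)) = 2*x+4*k+3"
  shows "(x+2*k+1)^2 * (RB*(x+1+2*n)^2*(h+e)^2 + 2*SB*(x+1+2*n)*(h+e) + WB) * (-(n+1-k)*(x+2*k+2)^2*(2*x+1+2*k)*b)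
    - ((k+1)*(x+1+2*k)^2*(2*x+5+2*n+2*k)) * (x+2*k+1)^2 * (RA*(x+1+2*n)^2*h^2 + 2*SA*(x+1+2*n)*h + WA)*b
   = b * (h^2 * ((x+1+2*n)^2*RB*(-(n+1-k)*(2*x+1+2*k)*(x+2*k+2)^2)*(x+2*k+1)^2
     - ((k+1)*(x+1+2*k)^2*(2*x+5+2*n+2*k))*(x+2*k+1)^2*(x+1+2*n)^2*RA)
    + h * ((x+1+2*n)^2*RB*(2*(-(n+1-k)*(2*x+1+2*k)*(x+2*k+2)*(2*x+4*k+3))*(x+2*k+1))
     + 2*(x+1+2*n)*SB*(-(n+1-k)*(2*x+1+2*k)*(x+2*k+2)^2)*(x+2*k+1)^2
     - ((k+1)*(x+1+2*k)^2*(2*x+5+2*n+2*k))*(x+2*k+1)^2*2*(x+1+2*n)*SA)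
    + ((x+1+2*n)^2*RB*(-(n+1-k)*(2*x+1+2*k)*(2*x+4*k+3)^2)
     + 2*(x+1+2*n)*SB*(-(n+1-k)*(2*x+1+2*k)*(x+2*k+2)*(2*x+4*k+3))*(x+2*k+1)
     + WB*(-(n+1-k)*(2*x+1+2*k)*(x+2*k+2)^2)*(x+2*k+1)^2
     - ((k+1)*(x+1+2*k)^2*(2*x+5+2*n+2*k))*(x+2*k+1)^2*WA))"
proof -
  have e1: "(x+2*k+1)*(x+2*k+2)^2*e = (x+2*k+2)*(2*x+4*k+3)" using he by algebra
  have e2: "(x+2*k+1)^2*(x+2*k+2)^2*e^2 = (2*x+4*k+3)^2" using he by algebra
  show ?thesis using e1 e2 by algebra
qed

lemma perk_abs:
  fixes x n k h e b b' a0 :: complex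
  assumes Z: "((k+1)*(x+1+2*k)^2*(2*x+5+2*n+2*k))*(x+2*k+1)^2 \<noteq> 0"
    and ha0: "a0 * ((n+1)*(2*x+1+2*n)) = (n+1-k)*(2*x+3+2*n+2*k)*((1+2*x+4*k)*b)"
    and hb: "b' * ((k+1)*(x+1+2*k)^2*(2*x+5+2*n+2*k)) = -(n+1-k)*(x+2*k+2)^2*(2*x+1+2*k)*b"
    and he: "e * ((x+2*k+1)*(x+2*k+2)) = 2*x+4*k+3"
  shows "(n+1)*(x+1+2*n)^4*((1+2*x+4*k)*b)*h^2 - (2*n-1)*(x+1+2*n)^2*(a0*((n+1)*(2*x+1+2*n)))*h^2
      + 2*(x+2)*(x+1+2*n)*(a0*((n+1)*(2*x+1+2*n)))*h + (2*x+3+2*n)*(a0*((n+1)*(2*x+1+2*n)))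
   = (PR x n (k+1)*(x+1+2*n)^2*(h+e)^2 + 2*PS x n (k+1)*(x+1+2*n)*(h+e) + PW x n (k+1))*b'
      - (PR x n k*(x+1+2*n)^2*h^2 + 2*PS x n k*(x+1+2*n)*h + PW x n k)*b"
    (is "?L = ?R")
proof -
  define Z' where "Z' = ((k+1)*(x+1+2*k)^2*(2*x+5+2*n+2*k))*(x+2*k+1)^2"
  define T where "T = (n+1-k)*(2*x+3+2*n+2*k)*(1+2*x+4*k)"
  have L1: "?L = b*(h^2*((n+1)*(x+1+2*n)^4*(1+2*x+4*k) - (n+1-k)*(2*x+3+2*n+2*k)*(1+2*x+4*k)*(2*n-1)*(x+1+2*n)^2)
      + h*((n+1-k)*(2*x+3+2*n+2*k)*(1+2*x+4*k)*(2*(x+2)*(x+1+2*n)))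
      + ((n+1-k)*(2*x+3+2*n+2*k)*(1+2*x+4*k)*(2*x+3+2*n)))"
    unfolding ha0 by algebra
  have L2: "Z' * ?L = b*(h^2*(Z'*((n+1)*(x+1+2*n)^4*(1+2*x+4*k) - (n+1-k)*(2*x+3+2*n+2*k)*(1+2*x+4*k)*(2*n-1)*(x+1+2*n)^2))
      + h*(Z'*((n+1-k)*(2*x+3+2*n+2*k)*(1+2*x+4*k)*(2*(x+2)*(x+1+2*n))))
      + (Z'*((n+1-k)*(2*x+3+2*n+2*k)*(1+2*x+4*k)*(2*x+3+2*n))))"
    unfolding L1 by algebra
  have R1: "Z' * ?R = (x+2*k+1)^2 * (PR x n (k+1)*(x+1+2*n)^2*(h+e)^2 + 2*PS x n (k+1)*(x+1+2*n)*(h+e) + PW x n (k+1)) * (b' * ((k+1)*(x+1+2*k)^2*(2*x+5+2*n+2*k)))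
    - ((k+1)*(x+1+2*k)^2*(2*x+5+2*n+2*k)) * (x+2*k+1)^2 * (PR x n k*(x+1+2*n)^2*h^2 + 2*PS x n k*(x+1+2*n)*h + PW x n k)*b"
    unfolding Z'_def by algebra
  have "Z' * ?L = Z' * ?R"
    unfolding L2 R1 hb unfolding Z'_def C2 C1 C0
    using s2[OF he, where h=h and n=n and b=b and RB="PR x n (k+1)" and SB="PS x n (k+1)" and WB="PW x n (k+1)" and RA="PR x n k" and SA="PS x n k" and WA="PW x n k"]
    by (simp only: ac_simps)
  thus ?thesis using Z unfolding Z'_def by simp
qed


definition AA :: "complex \<Rightarrow> nat \<Rightarrow> nat \<Rightarrow> complex" where
 "AA x n k = (-1)^k * of_nat (n choose k)
            * (((x / 2 + of_nat k) gchoose k)^2 * ((x - 1/2 + of_nat k) gchoose k))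
            / ((((x - 1) / 2 + of_nat k) gchoose k)^2 * ((x - 1/2 + of_nat n + of_nat k) gchoose k))
            * ((1 + 2 * x + 4 * of_nat k) / (1 + 2 * x + 2 * of_nat n + 2 * of_nat k))"

definition Bt :: "complex \<Rightarrow> nat \<Rightarrow> nat \<Rightarrow> complex" where
 "Bt x m k = AA x m k / (1 + 2 * x + 4 * of_nat k)"

lemma nzI: "Im z \<noteq> 0 \<Longrightarrow> (z = 0) \<longleftrightarrow> False" by auto

lemma gch_nz: assumes "Im y \<noteq> 0" shows "y gchoose k \<noteq> 0"
proof -
  have "(\<Prod>i=0..<k. y - of_nat i) \<noteq> 0"
    using assms by (auto simp: nzI)
  thus ?thesis unfolding gbinomial_prod_rev by simp
qed

lemma gstep: fixes y :: complex shows "(y + of_nat (Suc k)) gchoose (Suc k) = ((y + of_nat k) gchoose k) * (y + of_nat (Suc k)) / of_nat (Suc k)"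
proof -
  have "of_nat (Suc k) * ((y + of_nat (Suc k)) gchoose Suc k) = (y + of_nat (Suc k)) * ((y + of_nat (Suc k) - 1) gchoose k)"
    by (rule gbinomial_absorption)
  moreover have "y + of_nat (Suc k) - 1 = y + of_nat k" by simp
  moreover have "(of_nat (Suc k) :: complex) \<noteq> 0" by (rule of_nat_neq_0)
  ultimately show ?thesis by (metis nonzero_mult_div_cancel_left mult.commute times_divide_eq_right)
qed

lemma gshift: fixes y :: complex shows "(((y + 1) + of_nat k) gchoose k) * (y + 1) = ((y + of_nat k) gchoose k) * (y + 1 + of_nat k)"
proof -
  have a: "(y + 1) + of_nat k - of_nat k + 1 = y + 2" by simp
  have b: "y + of_nat k - of_nat k + 1 = y + 1" by simp
  have "pochhammer (y + 2) k * (y + 1) = pochhammer (y+1) k * (y + 1 + of_nat k)"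
  proof -
    have "pochhammer (y+1) (Suc k) = (y+1) * pochhammer (y+1+1) k" by (rule pochhammer_rec)
    moreover have "pochhammer (y+1) (Suc k) = pochhammer (y+1) k * (y+1+of_nat k)" by (rule pochhammer_Suc)
    moreover have "y + 1 + 1 = y + 2" by simp
    ultimately show ?thesis by (simp add: mult.commute)
  qed
  thus ?thesis unfolding gbinomial_pochhammer' a b by (simp add: field_simps)
qed

lemma choose_step: "(m choose Suc k) * Suc k = (m choose k) * (m - k)"
proof (cases m)
  case 0 then show ?thesis by simp
next
  case (Suc n)
  have "(m - k) * (m choose k) = m * ((m - 1) choose k)" by (rule binomial_absorb_comp)
  moreover have "Suc k * (Suc n choose Suc k) = Suc n * (n choose k)" by (rule Suc_times_binomial)
  ultimately show ?thesis using Suc by (simp add: mult.commute)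
qed

lemma abs_ratio:
  fixes s C A B Cc D v a1 b1 c1 d1 v' p q :: complex
  assumes "p \<noteq> 0" "Cc \<noteq> 0" "D \<noteq> 0" "v \<noteq> 0" "c1 \<noteq> 0" "d1 \<noteq> 0" "v' \<noteq> 0"
  shows "(-s)*(C*q/p) * ((A*a1/p)^2 * (B*b1/p)) / ((Cc*c1/p)^2 * (D*d1/p) * v')
     = (s*C*(A^2*B)/(Cc^2*D*v)) * (-q*a1^2*b1*v/(p*c1^2*d1*v'))"
  using assms by (simp add: field_simps power2_eq_square)

lemma abs_bt:
  fixes a b w v :: complex
  assumes "w \<noteq> 0"
  shows "(a / b * (w / v)) / w = a / (b * v)"
  using assms by (simp add: field_simps)

lemma abs_fin:
  fixes q a1 b1 c1 d1 v' p :: complex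
  assumes "p \<noteq> 0" "c1 \<noteq> 0" "d1 \<noteq> 0" "v' \<noteq> 0"
  shows "(-q*a1^2*b1*(2*d1)/(p*c1^2*d1*v'))*(p*(2*c1)^2*v') = -q*(2*a1)^2*(2*b1)"
  using assms by (simp add: field_simps power2_eq_square)

lemma Bt_alt:
  assumes hx: "Im x \<noteq> 0"
  shows "Bt x m k = (-1)^k * of_nat (m choose k) * (((x / 2 + of_nat k) gchoose k)^2 * ((x - 1/2 + of_nat k) gchoose k))
            / ((((x - 1) / 2 + of_nat k) gchoose k)^2 * ((x - 1/2 + of_nat m + of_nat k) gchoose k) * (1 + 2 * x + 2 * of_nat m + 2 * of_nat k))"
proof -
  have "(1 + 2 * x + 4 * of_nat k) \<noteq> 0" by (simp add: nzI hx)
  thus ?thesis unfolding Bt_def AA_def by (rule abs_bt)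
qed

lemma ratio2:
  assumes hx: "Im x \<noteq> 0" and km: "k \<le> m"
  shows "Bt x m (Suc k) * ((of_nat k+1)*(x+1+2*of_nat k)^2*(2*x+3+2*of_nat m+2*of_nat k))
     = -(of_nat m - of_nat k)*(x+2*of_nat k+2)^2*(2*x+1+2*of_nat k)*Bt x m k"
proof -
  define gA where "gA = (x / 2 + of_nat k) gchoose k"
  define gB where "gB = (x - 1/2 + of_nat k) gchoose k"
  define gC where "gC = ((x - 1) / 2 + of_nat k) gchoose k"
  define gD where "gD = (x - 1/2 + of_nat m + of_nat k) gchoose k"
  have nA: "gA \<noteq> 0" unfolding gA_def by (rule gch_nz) (simp add: hx)
  have nB: "gB \<noteq> 0" unfolding gB_def by (rule gch_nz) (simp add: hx)
  have nC: "gC \<noteq> 0" unfolding gC_def by (rule gch_nz) (simp add: hx)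
  have nD: "gD \<noteq> 0" unfolding gD_def by (rule gch_nz) (simp add: hx)
  have sA: "(x / 2 + of_nat (Suc k)) gchoose (Suc k) = gA * (x/2 + of_nat (Suc k)) / of_nat (Suc k)"
    unfolding gA_def by (rule gstep)
  have sB: "(x - 1/2 + of_nat (Suc k)) gchoose (Suc k) = gB * (x - 1/2 + of_nat (Suc k)) / of_nat (Suc k)"
    unfolding gB_def by (rule gstep)
  have sC: "((x - 1)/2 + of_nat (Suc k)) gchoose (Suc k) = gC * ((x - 1)/2 + of_nat (Suc k)) / of_nat (Suc k)"
    unfolding gC_def by (rule gstep)
  have sD: "(x - 1/2 + of_nat m + of_nat (Suc k)) gchoose (Suc k) = gD * (x - 1/2 + of_nat m + of_nat (Suc k)) / of_nat (Suc k)"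
    unfolding gD_def by (rule gstep)
  have n7: "(of_nat (Suc k) :: complex) \<noteq> 0" by (rule of_nat_neq_0)
  have cs: "of_nat (m choose Suc k) = (of_nat (m choose k) * (of_nat m - of_nat k) / of_nat (Suc k) :: complex)"
  proof -
    have "of_nat ((m choose Suc k) * Suc k) = (of_nat ((m choose k) * (m - k)) :: complex)"
      by (simp only: choose_step)
    hence "of_nat (m choose Suc k) * of_nat (Suc k) = (of_nat (m choose k) * (of_nat m - of_nat k) :: complex)"
      using km by (simp only: of_nat_mult of_nat_diff)
    thus ?thesis using n7 by (simp add: eq_divide_eq)
  qed
  have sk: "(of_nat (Suc k) :: complex) = of_nat k + 1" by simp
  define v where "v = 1 + 2 * x + 2 * of_nat m + 2 * of_nat k"
  define v' where "v' = 1 + 2 * x + 2 * of_nat m + 2 * of_nat (Suc k)"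
  define a1 where "a1 = x/2 + of_nat (Suc k)"
  define b1 where "b1 = x - 1/2 + of_nat (Suc k)"
  define c1 where "c1 = (x - 1)/2 + of_nat (Suc k)"
  define d1 where "d1 = x - 1/2 + of_nat m + of_nat (Suc k)"
  have nv: "v \<noteq> 0" unfolding v_def by (simp add: nzI hx)
  have nv': "v' \<noteq> 0" unfolding v'_def by (simp add: nzI hx)
  have nc1: "c1 \<noteq> 0" unfolding c1_def by (simp add: nzI hx)
  have nd1: "d1 \<noteq> 0" unfolding d1_def by (simp add: nzI hx)
  have e1: "Bt x m (Suc k) = (-((-1)^k))*(of_nat (m choose k)*(of_nat m - of_nat k)/of_nat (Suc k)) * ((gA*a1/of_nat (Suc k))^2 * (gB*b1/of_nat (Suc k))) / ((gC*c1/of_nat (Suc k))^2 * (gD*d1/of_nat (Suc k)) * v')"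
    unfolding Bt_alt[OF hx] sA sB sC sD cs unfolding v'_def a1_def b1_def c1_def d1_def by (simp only: power_Suc mult_minus1 mult.assoc)
  have e0: "Bt x m k = (-1)^k * of_nat (m choose k) * (gA^2*gB) / (gC^2*gD*v)"
    unfolding Bt_alt[OF hx] gA_def gB_def gC_def gD_def v_def by simp
  have r: "Bt x m (Suc k) = Bt x m k * (-(of_nat m - of_nat k)*a1^2*b1*v/(of_nat (Suc k)*c1^2*d1*v'))"
    unfolding e1 e0 by (rule abs_ratio[OF n7 nC nD nv nc1 nd1 nv'])
  have c1e: "x+1+2*of_nat k = 2*c1" unfolding c1_def by (simp add: field_simps)
  have d1e: "v = 2*d1" unfolding d1_def v_def by (simp add: field_simps)
  have v'e: "2*x+3+2*of_nat m+2*of_nat k = v'" unfolding v'_def by (simp add: field_simps)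
  have a1e: "x+2*of_nat k+2 = 2*a1" unfolding a1_def by (simp add: field_simps)
  have b1e: "2*x+1+2*of_nat k = 2*b1" unfolding b1_def by (simp add: field_simps)
  have pe: "(of_nat k + 1 :: complex) = of_nat (Suc k)" by simp
  have fin: "(-(of_nat m - of_nat k)*a1^2*b1*v/(of_nat (Suc k)*c1^2*d1*v')) * ((of_nat k+1)*(x+1+2*of_nat k)^2*(2*x+3+2*of_nat m+2*of_nat k))
     = -(of_nat m - of_nat k)*(x+2*of_nat k+2)^2*(2*x+1+2*of_nat k)"
    unfolding c1e v'e a1e b1e pe d1e using abs_fin[OF n7 nc1 nd1 nv'] .
  have "Bt x m (Suc k) * ((of_nat k+1)*(x+1+2*of_nat k)^2*(2*x+3+2*of_nat m+2*of_nat k))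
     = Bt x m k * ((-(of_nat m - of_nat k)*a1^2*b1*v/(of_nat (Suc k)*c1^2*d1*v')) * ((of_nat k+1)*(x+1+2*of_nat k)^2*(2*x+3+2*of_nat m+2*of_nat k)))"
    unfolding r by (rule mult.assoc)
  also have "\<dots> = Bt x m k * (-(of_nat m - of_nat k)*(x+2*of_nat k+2)^2*(2*x+1+2*of_nat k))"
    unfolding fin ..
  finally show ?thesis by (simp only: mult.commute)
qed
lemma abs_r1:
  fixes s C P Q gD w p q u t v' :: complex
  assumes "Q \<noteq> 0" "gD \<noteq> 0" "q \<noteq> 0" "u \<noteq> 0" "t \<noteq> 0" "v' \<noteq> 0"
  shows "s * C * P / (Q * gD) * (w / (2*t)) * (p * (2*u))
      = q * v' * (s * (p*C/q) * P / (Q * (gD*t/u)) * (w / v'))"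
  using assms by (simp add: field_simps)

lemma ratio1:
  assumes hx: "Im x \<noteq> 0" and kn: "k \<le> Suc n"
  shows "AA x n k * ((of_nat n+1)*(2*x+1+2*of_nat n))
     = (of_nat n+1-of_nat k)*(2*x+3+2*of_nat n+2*of_nat k)*((1+2*x+4*of_nat k)*Bt x (Suc n) k)"
proof (cases "k = Suc n")
  case True
  then show ?thesis by (simp add: AA_def)
next
  case False
  hence kn': "k \<le> n" using kn by simp
  have nw: "(1 + 2 * x + 4 * of_nat k) \<noteq> 0" by (simp add: nzI hx)
  have bt: "(1+2*x+4*of_nat k)*Bt x (Suc n) k = AA x (Suc n) k"
    unfolding Bt_def using nw by simp
  define y where "y = x - 1/2 + of_nat n"
  have ye: "x - 1/2 + of_nat (Suc n) + of_nat k = (y + 1) + of_nat k" unfolding y_def by simp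
  have nu: "y + 1 \<noteq> 0" unfolding y_def by (simp add: nzI hx)
  have nuk: "y + 1 + of_nat k \<noteq> 0" unfolding y_def by (simp add: nzI hx)
  have gDe: "(x - 1/2 + of_nat (Suc n) + of_nat k) gchoose k = ((y + of_nat k) gchoose k) * (y + 1 + of_nat k) / (y + 1)"
    unfolding ye using gshift[of y k] nu by (simp add: eq_divide_eq)
  have q: "(of_nat n + 1 - of_nat k :: complex) \<noteq> 0"
  proof
    assume "(of_nat n + 1 - of_nat k :: complex) = 0"
    hence "(of_nat (Suc n) :: complex) = of_nat k" by (simp add: add.commute)
    hence "Suc n = k" by (simp only: of_nat_eq_iff)
    thus False using kn' by simp
  qed
  have cs: "of_nat (Suc n choose k) = (of_nat n + 1) * of_nat (n choose k) / (of_nat n + 1 - of_nat k :: complex)"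
  proof -
    have "(Suc n - k) * (Suc n choose k) = Suc n * (n choose k)"
      using binomial_absorb_comp[of "Suc n" k] by simp
    hence "of_nat (Suc n choose k) * (of_nat n + 1 - of_nat k) = (of_nat n + 1) * (of_nat (n choose k) :: complex)"
      using kn by (metis (no_types, lifting) mult.commute of_nat_Suc of_nat_diff of_nat_mult add.commute)
    thus ?thesis using q by (simp add: eq_divide_eq)
  qed
  have nQ: "(((x - 1) / 2 + of_nat k) gchoose k)^2 \<noteq> 0" by (simp add: gch_nz hx)
  have nD: "(y + of_nat k) gchoose k \<noteq> 0" unfolding y_def by (rule gch_nz) (simp add: hx)
  have nv': "1 + 2 * x + 2 * of_nat (Suc n) + 2 * of_nat k \<noteq> 0" by (simp add: nzI hx)
  have ve: "1 + 2 * x + 2 * of_nat n + 2 * of_nat k = 2 * ((y + 1) + of_nat k)" unfolding y_def by (simp add: field_simps)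
  have ue: "(of_nat n + 1) * (2 * x + 1 + 2 * of_nat n) = (of_nat n + 1) * (2 * (y + 1))" unfolding y_def by (simp add: field_simps)
  have v'e: "2*x+3+2*of_nat n+2*of_nat k = 1 + 2 * x + 2 * of_nat (Suc n) + 2 * of_nat k" by simp
  show ?thesis
    unfolding bt unfolding AA_def gDe cs ve ue v'e unfolding y_def[symmetric]
    by (rule abs_r1[OF nQ nD q nu nuk nv'])
qed

definition ee :: "complex \<Rightarrow> nat \<Rightarrow> complex" where
  "ee x k = 1 / (x + of_nat (Suc (2*k))) + 1 / (x + of_nat (Suc (Suc (2*k))))"

lemma H_step: "H (2 * Suc k) x = H (2 * k) x + ee x k"
proof -
  have "2 * Suc k = Suc (Suc (2*k))" by simp
  thus ?thesis unfolding H_def ee_def by simp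
qed

lemma ee_eq:
  assumes hx: "Im x \<noteq> 0"
  shows "ee x k * ((x+2*of_nat k+1)*(x+2*of_nat k+2)) = 2*x+4*of_nat k+3"
proof -
  have a: "x + of_nat (Suc (2*k)) = x+2*of_nat k+1" by simp
  have b: "x + of_nat (Suc (Suc (2*k))) = x+2*of_nat k+2" by simp
  have n1: "x+2*of_nat k+1 \<noteq> 0" by (simp add: nzI hx)
  have n2: "x+2*of_nat k+2 \<noteq> 0" by (simp add: nzI hx)
  have q: "\<And>a b :: complex. a \<noteq> 0 \<Longrightarrow> b \<noteq> 0 \<Longrightarrow> (1/a + 1/b) * (a*b) = b + a"
    by (simp add: field_simps)
  have "x+2*of_nat k+2 + (x+2*of_nat k+1) = 2*x+4*of_nat k+3" by simp
  thus ?thesis unfolding ee_def a b using q[OF n1 n2] by simp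

qed

definition GG :: "complex \<Rightarrow> nat \<Rightarrow> complex \<Rightarrow> nat \<Rightarrow> complex" where
  "GG x n t k = (PR x (of_nat n) (of_nat k)*(x+1+2*of_nat n)^2*(H (2*k) x + t)^2
      + 2*PS x (of_nat n) (of_nat k)*(x+1+2*of_nat n)*(H (2*k) x + t) + PW x (of_nat n) (of_nat k)) * Bt x (Suc n) k"

lemma perk:
  assumes hx: "Im x \<noteq> 0" and kn: "k \<le> Suc n"
  shows "(of_nat n+1)*(x+1+2*of_nat n)^4 * AA x (Suc n) k * (H (2*k) x + t)^2
     - (2*of_nat n-1)*(x+1+2*of_nat n)^2*((of_nat n+1)*(2*x+1+2*of_nat n)) * AA x n k * (H (2*k) x + t)^2
     + 2*(x+2)*(x+1+2*of_nat n)*((of_nat n+1)*(2*x+1+2*of_nat n)) * AA x n k * (H (2*k) x + t)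
     + (2*x+3+2*of_nat n)*((of_nat n+1)*(2*x+1+2*of_nat n)) * AA x n k
     = GG x n t (Suc k) - GG x n t k"
proof -
  let ?N = "of_nat n :: complex" and ?K = "of_nat k :: complex"
  have nk1: "(?K + 1) \<noteq> 0" by (metis of_nat_Suc of_nat_eq_0_iff add.commute nat.distinct(1))
  have Z: "((?K+1)*(x+1+2*?K)^2*(2*x+5+2*?N+2*?K))*(x+2*?K+1)^2 \<noteq> 0"
    using nk1 by (simp add: nzI hx)
  have ha0: "AA x n k * ((?N+1)*(2*x+1+2*?N)) = (?N+1-?K)*(2*x+3+2*?N+2*?K)*((1+2*x+4*?K)*Bt x (Suc n) k)"
    by (rule ratio1[OF hx kn])
  have e1: "(2*x+3+2*of_nat (Suc n)+2*?K) = 2*x+5+2*?N+2*?K" by simp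
  have e2: "(of_nat (Suc n) - ?K) = ?N+1-?K" by simp
  have hb: "Bt x (Suc n) (Suc k) * ((?K+1)*(x+1+2*?K)^2*(2*x+5+2*?N+2*?K)) = -(?N+1-?K)*(x+2*?K+2)^2*(2*x+1+2*?K)*Bt x (Suc n) k"
    using ratio2[OF hx kn] unfolding e1 e2 .
  have bt: "(1+2*x+4*?K)*Bt x (Suc n) k = AA x (Suc n) k"
  proof -
    have "(1 + 2 * x + 4 * ?K) \<noteq> 0" by (simp add: nzI hx)
    thus ?thesis unfolding Bt_def by simp
  qed
  note P = perk_abs[OF Z ha0 hb ee_eq[OF hx], where h="H (2*k) x + t"]
  have sk: "(of_nat (Suc k) :: complex) = ?K + 1" by simp
  have hs: "H (2 * k) x + t + ee x k = H (2 * Suc k) x + t" unfolding H_step by simp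
  have G1: "GG x n t (Suc k) = (PR x ?N (?K+1)*(x+1+2*?N)^2*(H (2*k) x + t + ee x k)^2 + 2*PS x ?N (?K+1)*(x+1+2*?N)*(H (2*k) x + t + ee x k) + PW x ?N (?K+1))*Bt x (Suc n) (Suc k)"
    unfolding GG_def hs sk ..
  have G0: "GG x n t k = (PR x ?N ?K*(x+1+2*?N)^2*(H (2*k) x + t)^2 + 2*PS x ?N ?K*(x+1+2*?N)*(H (2*k) x + t) + PW x ?N ?K)*Bt x (Suc n) k"
    unfolding GG_def ..
  show ?thesis unfolding G1 G0 P[symmetric] bt[symmetric] by algebra
qed


definition S0 :: "complex \<Rightarrow> nat \<Rightarrow> complex" where "S0 x n = (\<Sum>k=0..n. AA x n k)"
definition S1 :: "complex \<Rightarrow> nat \<Rightarrow> complex" where "S1 x n = (\<Sum>k=0..n. AA x n k * H (2*k) x)"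
definition S2 :: "complex \<Rightarrow> nat \<Rightarrow> complex" where "S2 x n = (\<Sum>k=0..n. AA x n k * (H (2*k) x)^2)"

lemma AA_out: "AA x n (Suc n) = 0"
proof -
  have c: "(n choose Suc n) = 0" by (rule binomial_eq_0) simp
  show ?thesis unfolding AA_def c by simp
qed

lemma sum_ext: "(\<Sum>k=0..Suc n. AA x n k * f k) = (\<Sum>k=0..n. AA x n k * f k)"
  by (simp add: AA_out)

lemma GG_top: "GG x n t (Suc (Suc n)) = 0"
proof -
  have c: "(Suc n choose Suc (Suc n)) = 0" by (rule binomial_eq_0) simp
  have "AA x (Suc n) (Suc (Suc n)) = 0" unfolding AA_def c by simp
  thus ?thesis unfolding GG_def Bt_def by simp
qed

lemma GG_0: "GG x n t 0 = 0"
  by (simp add: GG_def PR_def PS_def PW_def)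

lemma rec_all:
  assumes hx: "Im x \<noteq> 0"
  shows "t^2 * ((of_nat n+1)*(x+1+2*of_nat n)^4 * S0 x (Suc n) - (2*of_nat n-1)*(x+1+2*of_nat n)^2*((of_nat n+1)*(2*x+1+2*of_nat n)) * S0 x n)
       + t * (2*((of_nat n+1)*(x+1+2*of_nat n)^4) * S1 x (Suc n) - 2*((2*of_nat n-1)*(x+1+2*of_nat n)^2*((of_nat n+1)*(2*x+1+2*of_nat n))) * S1 x n
              + 2*(x+2)*(x+1+2*of_nat n)*((of_nat n+1)*(2*x+1+2*of_nat n)) * S0 x n)
       + ((of_nat n+1)*(x+1+2*of_nat n)^4 * S2 x (Suc n) - (2*of_nat n-1)*(x+1+2*of_nat n)^2*((of_nat n+1)*(2*x+1+2*of_nat n)) * S2 x n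
          + 2*(x+2)*(x+1+2*of_nat n)*((of_nat n+1)*(2*x+1+2*of_nat n)) * S1 x n + (2*x+3+2*of_nat n)*((of_nat n+1)*(2*x+1+2*of_nat n)) * S0 x n) = 0"
proof -
  define cK where "cK = (of_nat n+1)*(x+1+2*of_nat n)^4"
  define cc where "cc = (2*of_nat n-1)*(x+1+2*of_nat n)^2*((of_nat n+1)*(2*x+1+2*of_nat n))"
  define ce where "ce = 2*(x+2)*(x+1+2*of_nat n)*((of_nat n+1)*(2*x+1+2*of_nat n))"
  define cf where "cf = (2*x+3+2*of_nat n)*((of_nat n+1)*(2*x+1+2*of_nat n))"
  define h where "h = (\<lambda>k. H (2*k) x)"
  have tel: "(\<Sum>k=0..Suc n. cK * AA x (Suc n) k * (h k + t)^2 - cc * AA x n k * (h k + t)^2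
       + ce * AA x n k * (h k + t) + cf * AA x n k) = 0"
  proof -
    have "(\<Sum>k=0..Suc n. cK * AA x (Suc n) k * (h k + t)^2 - cc * AA x n k * (h k + t)^2
       + ce * AA x n k * (h k + t) + cf * AA x n k) = (\<Sum>k=0..Suc n. GG x n t (Suc k) - GG x n t k)"
      apply (rule sum.cong, rule refl)
      unfolding cK_def cc_def ce_def cf_def h_def
      apply (rule perk[OF hx])
      by simp
    also have "\<dots> = GG x n t (Suc (Suc n)) - GG x n t 0" by (rule sum_Suc_diff) simp
    also have "\<dots> = 0" by (simp add: GG_top GG_0)
    finally show ?thesis .
  qed
  have pt: "\<And>k. cK * AA x (Suc n) k * (h k + t)^2 - cc * AA x n k * (h k + t)^2
       + ce * AA x n k * (h k + t) + cf * AA x n k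
     = t^2 * (cK * AA x (Suc n) k) - t^2 * (cc * AA x n k)
       + t * (2*cK * (AA x (Suc n) k * h k)) - t * (2*cc * (AA x n k * h k)) + t * (ce * AA x n k)
       + cK * (AA x (Suc n) k * (h k)^2) - cc * (AA x n k * (h k)^2) + ce * (AA x n k * h k) + cf * AA x n k"
    by algebra
  have sA: "(\<Sum>k=0..Suc n. AA x n k) = S0 x n" using sum_ext[of x n "\<lambda>k. 1"] by (simp add: S0_def)
  have sB: "(\<Sum>k=0..Suc n. AA x n k * h k) = S1 x n" using sum_ext[of x n h] by (simp add: S1_def h_def)
  have sC: "(\<Sum>k=0..Suc n. AA x n k * (h k)^2) = S2 x n" using sum_ext[of x n "\<lambda>k. (h k)^2"] by (simp add: S2_def h_def)
  have sA': "(\<Sum>k=0..Suc n. AA x (Suc n) k) = S0 x (Suc n)" by (simp add: S0_def)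
  have sB': "(\<Sum>k=0..Suc n. AA x (Suc n) k * h k) = S1 x (Suc n)" by (simp add: S1_def h_def)
  have sC': "(\<Sum>k=0..Suc n. AA x (Suc n) k * (h k)^2) = S2 x (Suc n)" by (simp add: S2_def h_def)
  have "0 = (\<Sum>k=0..Suc n. t^2 * (cK * AA x (Suc n) k) - t^2 * (cc * AA x n k)
       + t * (2*cK * (AA x (Suc n) k * h k)) - t * (2*cc * (AA x n k * h k)) + t * (ce * AA x n k)
       + cK * (AA x (Suc n) k * (h k)^2) - cc * (AA x n k * (h k)^2) + ce * (AA x n k * h k) + cf * AA x n k)"
    unfolding tel[symmetric] pt ..
  also have "\<dots> = t^2 * (cK * (\<Sum>k=0..Suc n. AA x (Suc n) k)) - t^2 * (cc * (\<Sum>k=0..Suc n. AA x n k))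
       + t * (2*cK * (\<Sum>k=0..Suc n. AA x (Suc n) k * h k)) - t * (2*cc * (\<Sum>k=0..Suc n. AA x n k * h k)) + t * (ce * (\<Sum>k=0..Suc n. AA x n k))
       + cK * (\<Sum>k=0..Suc n. AA x (Suc n) k * (h k)^2) - cc * (\<Sum>k=0..Suc n. AA x n k * (h k)^2) + ce * (\<Sum>k=0..Suc n. AA x n k * h k) + cf * (\<Sum>k=0..Suc n. AA x n k)"
    by (simp only: sum.distrib sum_subtractf sum_distrib_left)
  finally have "0 = t^2 * (cK * S0 x (Suc n)) - t^2 * (cc * S0 x n)
       + t * (2*cK * S1 x (Suc n)) - t * (2*cc * S1 x n) + t * (ce * S0 x n)
       + cK * S2 x (Suc n) - cc * S2 x n + ce * S1 x n + cf * S0 x n"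
    unfolding sA sB sC sA' sB' sC' .
  thus ?thesis unfolding cK_def[symmetric] cc_def[symmetric] ce_def[symmetric] cf_def[symmetric]
    by algebra
qed


definition Cc :: "complex \<Rightarrow> nat \<Rightarrow> complex" where
  "Cc x n = ((x - 1/2 + of_nat n) gchoose n) * ((-3/2 + of_nat n) gchoose n) / ((((x - 1) / 2 + of_nat n) gchoose n)^2)"
definition Dd :: "complex \<Rightarrow> nat \<Rightarrow> complex" where
  "Dd x n = H n ((x - 1) / 2) - H n (-3/2)"

lemma step_abs:
  fixes cK cc ce cf Cn Cm Dn En dl ep S0n S1n S2n S0m S1m S2m :: complex
  assumes cK: "cK \<noteq> 0"
    and R: "\<And>t. t^2 * (cK * S0m - cc * S0n) + t * (2*cK * S1m - 2*cc * S1n + ce * S0n)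
          + (cK * S2m - cc * S2n + ce * S1n + cf * S0n) = 0"
    and hC: "cK * Cm = cc * Cn" and hd: "cc * dl = -ce" and he: "cc * (dl^2 - ep) = -4*cf"
    and I0: "S0n = Cn" and I1: "2*S1n = Cn*Dn" and I2: "4*S2n = Cn*(Dn^2-En)"
  shows "S0m = Cm \<and> 2*S1m = Cm*(Dn+dl) \<and> 4*S2m = Cm*((Dn+dl)^2 - (En+ep))"
proof -
  have r0: "cK * S2m - cc * S2n + ce * S1n + cf * S0n = 0" using R[of 0] by simp
  have r1: "(cK * S0m - cc * S0n) + (2*cK * S1m - 2*cc * S1n + ce * S0n) + (cK * S2m - cc * S2n + ce * S1n + cf * S0n) = 0"
    using R[of 1] by simp
  have r2: "4*(cK * S0m - cc * S0n) + 2*(2*cK * S1m - 2*cc * S1n + ce * S0n) + (cK * S2m - cc * S2n + ce * S1n + cf * S0n) = 0"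
    using R[of 2] by algebra
  have a: "cK * S0m - cc * S0n = 0" using r0 r1 r2 by algebra
  have b: "2*cK * S1m - 2*cc * S1n + ce * S0n = 0" using r0 r1 r2 by algebra
  have "cK * (S0m - Cm) = 0" using a hC I0 by algebra
  hence g0: "S0m = Cm" using cK by simp
  have "cK * (2*S1m - Cm*(Dn+dl)) = 0" using b hC hd I0 I1 by algebra
  hence g1: "2*S1m = Cm*(Dn+dl)" using cK by simp
  have "cK * (4*S2m - Cm*((Dn+dl)^2 - (En+ep))) = 0" using r0 hC hd he I0 I1 I2 by algebra
  hence g2: "4*S2m = Cm*((Dn+dl)^2 - (En+ep))" using cK by simp
  show ?thesis using g0 g1 g2 by simp
qed

lemma absC:
  fixes A B G a b g p cK :: complex
  assumes "p \<noteq> 0" "G \<noteq> 0" "g \<noteq> 0"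
  shows "cK * ((A*a/p)*(B*b/p)/((G*g/p)^2)) = (cK*(a*b/g^2)) * (A*B/G^2)"
  using assms by (simp add: field_simps power2_eq_square)

lemma absC2:
  fixes p w r g :: complex
  assumes "g \<noteq> 0"
  shows "(p*(2*g)^4)*((w/2)*(r/2)/g^2) = r*(2*g)^2*(p*w)"
  using assms by (simp add: field_simps power2_eq_square power4_eq_xxxx)

lemma absD:
  fixes p w r g :: complex
  assumes "g \<noteq> 0" "r \<noteq> 0"
  shows "(r*(2*g)^2*(p*w))*(1/g - 1/(r/2)) = -(2*(2*g-r)*(2*g)*(p*w))"
  using assms by (simp add: field_simps power2_eq_square)

lemma absE:
  fixes p w r g :: complex
  assumes "g \<noteq> 0" "r \<noteq> 0"
  shows "(r*(2*g)^2*(p*w))*((1/g - 1/(r/2))^2 - 1/(r/2)^2) = -4*((4*g-r)*(p*w))"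
  using assms by (simp add: field_simps power2_eq_square)

lemma nz_half: "(-3/2 + of_nat (Suc n) :: complex) \<noteq> 0"
proof
  assume a: "(-3/2 + of_nat (Suc n) :: complex) = 0"
  have "(of_nat (2*n) :: complex) = of_nat 1" using a by (simp add: field_simps)
  hence "2*n = 1" by (simp only: of_nat_eq_iff)
  thus False by presburger
qed

lemma closed_form:
  assumes hx: "Im x \<noteq> 0"
  shows "S0 x n = Cc x n \<and> 2 * S1 x n = Cc x n * Dd x n \<and> 4 * S2 x n = Cc x n * ((Dd x n)^2 - H2 n (-3/2))"
proof (induction n)
  case 0
  have "1 + 2*x \<noteq> 0" by (simp add: nzI hx)
  hence "AA x 0 0 = 1" by (simp add: AA_def)
  thus ?case by (simp add: S0_def S1_def S2_def Cc_def Dd_def H_def H2_def)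
next
  case (Suc n)
  let ?N = "of_nat n :: complex"
  define g where "g = (x - 1) / 2 + of_nat (Suc n)"
  define r where "r = 2 * ?N - 1"
  define p where "p = ?N + 1"
  define w where "w = 2*x+1+2*?N"
  have ng: "g \<noteq> 0" unfolding g_def by (simp add: nzI hx)
  have nr: "r \<noteq> 0" using nz_half[of n] unfolding r_def by (auto simp: algebra_simps)
  have e1: "x+1+2*?N = 2*g" unfolding g_def by (simp add: field_simps)
  have e2: "2*?N-1 = r" unfolding r_def ..
  have e3: "x+2 = 2*g - r" unfolding g_def r_def by (simp add: field_simps)
  have e4: "2*x+3+2*?N = 4*g - r" unfolding g_def r_def by (simp add: field_simps)
  have e5: "-3/2 + of_nat (Suc n) = r/2" unfolding r_def by (simp add: field_simps)
  have e6: "x - 1/2 + of_nat (Suc n) = w/2" unfolding w_def by (simp add: field_simps)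
  have cK: "(?N+1)*(x+1+2*?N)^4 \<noteq> 0" unfolding e1 using ng
    by (metis mult_eq_0_iff of_nat_Suc of_nat_eq_0_iff add.commute nat.distinct(1) power_eq_0_iff zero_neq_numeral)
  have hC: "((?N+1)*(x+1+2*?N)^4) * Cc x (Suc n) = ((2*?N-1)*(x+1+2*?N)^2*((?N+1)*(2*x+1+2*?N))) * Cc x n"
  proof -
    have sa: "(x - 1/2 + of_nat (Suc n)) gchoose Suc n = ((x - 1/2 + ?N) gchoose n) * (x - 1/2 + of_nat (Suc n)) / of_nat (Suc n)"
      by (rule gstep)
    have sb: "(-3/2 + of_nat (Suc n)) gchoose Suc n = ((-3/2 + ?N) gchoose n) * (-3/2 + of_nat (Suc n)) / of_nat (Suc n)"
      by (rule gstep)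
    have sc: "((x - 1)/2 + of_nat (Suc n)) gchoose Suc n = (((x - 1)/2 + ?N) gchoose n) * ((x - 1)/2 + of_nat (Suc n)) / of_nat (Suc n)"
      by (rule gstep)
    have nG: "((x - 1)/2 + ?N) gchoose n \<noteq> 0" by (rule gch_nz) (simp add: hx)
    have np: "(of_nat (Suc n) :: complex) \<noteq> 0" by (rule of_nat_neq_0)
    have "((?N+1)*(x+1+2*?N)^4) * Cc x (Suc n) = (((?N+1)*(x+1+2*?N)^4) * ((x - 1/2 + of_nat (Suc n))*(-3/2 + of_nat (Suc n))/((x - 1)/2 + of_nat (Suc n))^2)) * Cc x n"
      unfolding Cc_def sa sb sc by (rule absC[OF np nG]) (simp add: nzI hx)
    also have "\<dots> = ((2*?N-1)*(x+1+2*?N)^2*((?N+1)*(2*x+1+2*?N))) * Cc x n"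
      unfolding e6 e5 g_def[symmetric] unfolding e1 e2 w_def[symmetric] p_def[symmetric]
      using absC2[OF ng, of p w r] by simp
    finally show ?thesis .
  qed
  have dl: "Dd x (Suc n) = Dd x n + (1/((x-1)/2 + of_nat (Suc n)) - 1/(-3/2 + of_nat (Suc n)))"
    unfolding Dd_def H_def by simp
  have ep: "H2 (Suc n) (-3/2) = H2 n (-3/2) + 1/(-3/2 + of_nat (Suc n))^2"
    unfolding H2_def by simp
  have hd: "((2*?N-1)*(x+1+2*?N)^2*((?N+1)*(2*x+1+2*?N))) * (1/((x-1)/2 + of_nat (Suc n)) - 1/(-3/2 + of_nat (Suc n)))
      = - (2*(x+2)*(x+1+2*?N)*((?N+1)*(2*x+1+2*?N)))"
    unfolding e5 g_def[symmetric] unfolding e1 e2 e3 w_def[symmetric] p_def[symmetric]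
    by (rule absD[OF ng nr])
  have he: "((2*?N-1)*(x+1+2*?N)^2*((?N+1)*(2*x+1+2*?N))) * ((1/((x-1)/2 + of_nat (Suc n)) - 1/(-3/2 + of_nat (Suc n)))^2 - 1/(-3/2 + of_nat (Suc n))^2)
      = -4 * ((2*x+3+2*?N)*((?N+1)*(2*x+1+2*?N)))"
    unfolding e5 g_def[symmetric] unfolding e4 e1 e2 w_def[symmetric] p_def[symmetric]
    by (rule absE[OF ng nr])
  show ?case unfolding dl ep
    using step_abs[OF cK rec_all[OF hx] hC hd he] Suc.IH by blast
qed


lemma abs_fin4:
  fixes s a b g X :: complex
  assumes "4 * s = a * b / g * X"
  shows "s = 1/4 * (a * b) / g * X"
proof -
  have "s = (4 * s) / 4" by simp
  also have "\<dots> = (a * b / g * X) / 4" unfolding assms ..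
  also have "\<dots> = 1/4 * (a * b) / g * X" by (simp add: field_simps)
  finally show ?thesis .
qed

lemma main_nonreal:
  fixes n :: nat and x :: complex
  assumes hx: "Im x \<noteq> 0"
  shows "(\<Sum>k=0..n. (-1)^k * of_nat (n choose k)
            * (((x / 2 + of_nat k) gchoose k)^2 * ((x - 1/2 + of_nat k) gchoose k))
            / ((((x - 1) / 2 + of_nat k) gchoose k)^2 * ((x - 1/2 + of_nat n + of_nat k) gchoose k))
            * ((1 + 2 * x + 4 * of_nat k) / (1 + 2 * x + 2 * of_nat n + 2 * of_nat k))
            * (H (2 * k) x)^2)
         = 1/4 * (((x - 1/2 + of_nat n) gchoose n) * ((-3/2 + of_nat n) gchoose n))
             / ((((x - 1) / 2 + of_nat n) gchoose n)^2)
           * ((H n ((x - 1) / 2) - H n (-3/2))^2 - H2 n (-3/2))"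
proof -
  have e: "(\<Sum>k=0..n. (-1)^k * of_nat (n choose k)
            * (((x / 2 + of_nat k) gchoose k)^2 * ((x - 1/2 + of_nat k) gchoose k))
            / ((((x - 1) / 2 + of_nat k) gchoose k)^2 * ((x - 1/2 + of_nat n + of_nat k) gchoose k))
            * ((1 + 2 * x + 4 * of_nat k) / (1 + 2 * x + 2 * of_nat n + 2 * of_nat k))
            * (H (2 * k) x)^2) = S2 x n"
    unfolding S2_def AA_def ..
  have "4 * S2 x n = Cc x n * ((Dd x n)^2 - H2 n (-3/2))" using closed_form[OF hx] by blast
  hence "4 * S2 x n = ((x - 1/2 + of_nat n) gchoose n) * ((-3/2 + of_nat n) gchoose n) / ((((x - 1) / 2 + of_nat n) gchoose n)^2)
           * ((H n ((x - 1) / 2) - H n (-3/2))^2 - H2 n (-3/2))"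
    unfolding Cc_def Dd_def .
  thus ?thesis unfolding e by (rule abs_fin4)
qed

lemma isCont_gch: "isCont f x \<Longrightarrow> isCont (\<lambda>z. (f z :: complex) gchoose k) x"
  unfolding gbinomial_prod_rev by (intro continuous_intros) auto


lemma cont_lhs:
  fixes n :: nat and x :: complex
  assumes hx: "\<And>j. 1 \<le> j \<Longrightarrow> j \<le> 2 * n \<Longrightarrow> x + of_nat j \<noteq> 0"
    and hd1: "\<And>k. k \<le> n \<Longrightarrow> ((x - 1) / 2 + of_nat k) gchoose k \<noteq> 0"
    and hd2: "\<And>k. k \<le> n \<Longrightarrow> (x - 1/2 + of_nat n + of_nat k) gchoose k \<noteq> 0"
    and hd3: "\<And>k. k \<le> n \<Longrightarrow> 1 + 2 * x + 2 * of_nat n + 2 * of_nat k \<noteq> 0"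
  shows "isCont (\<lambda>z. \<Sum>k=0..n. (-1)^k * of_nat (n choose k)
            * (((z / 2 + of_nat k) gchoose k)^2 * ((z - 1/2 + of_nat k) gchoose k))
            / ((((z - 1) / 2 + of_nat k) gchoose k)^2 * ((z - 1/2 + of_nat n + of_nat k) gchoose k))
            * ((1 + 2 * z + 4 * of_nat k) / (1 + 2 * z + 2 * of_nat n + 2 * of_nat k))
            * (H (2 * k) z)^2) x"
proof (intro continuous_intros isCont_gch)
  fix k assume k: "k \<in> {0..n}"
  show "(((x - 1) / 2 + of_nat k) gchoose k)^2 * ((x - 1/2 + of_nat n + of_nat k) gchoose k) \<noteq> 0"
    using hd1[of k] hd2[of k] k by simp
  show "1 + 2 * x + 2 * of_nat n + 2 * of_nat k \<noteq> 0" using hd3[of k] k by simp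
  show "isCont (\<lambda>z. H (2 * k) z) x"
    unfolding H_def
  proof (intro continuous_intros)
    fix j assume j: "j \<in> {1..2*k}"
    show "x + of_nat j \<noteq> 0" using hx[of j] j k by simp
  qed
qed simp_all

lemma cont_rhs:
  fixes n :: nat and x :: complex
  assumes hx2: "\<And>j. 1 \<le> j \<Longrightarrow> j \<le> n \<Longrightarrow> (x - 1) / 2 + of_nat j \<noteq> 0"
    and hd1: "\<And>k. k \<le> n \<Longrightarrow> ((x - 1) / 2 + of_nat k) gchoose k \<noteq> 0"
  shows "isCont (\<lambda>z. 1/4 * (((z - 1/2 + of_nat n) gchoose n) * ((-3/2 + of_nat n) gchoose n))
             / ((((z - 1) / 2 + of_nat n) gchoose n)^2)
           * ((H n ((z - 1) / 2) - H n (-3/2))^2 - H2 n (-3/2))) x"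
proof (intro continuous_intros isCont_gch)
  show "(((x - 1) / 2 + of_nat n) gchoose n)^2 \<noteq> 0" using hd1[of n] by simp
  show "isCont (\<lambda>z. H n ((z - 1) / 2)) x"
    unfolding H_def
  proof (intro continuous_intros)
    fix j assume j: "j \<in> {1..n}"
    show "(x - 1) / 2 + of_nat j \<noteq> 0" using hx2[of j] j by simp
  qed simp_all
qed simp_all


theorem theorem8:
  fixes n :: nat and x :: complex
  assumes hx: "\<And>j. 1 \<le> j \<Longrightarrow> j \<le> 2 * n \<Longrightarrow> x + of_nat j \<noteq> 0"
    and hx2: "\<And>j. 1 \<le> j \<Longrightarrow> j \<le> n \<Longrightarrow> (x - 1) / 2 + of_nat j \<noteq> 0"
    and hd1: "\<And>k. k \<le> n \<Longrightarrow> ((x - 1) / 2 + of_nat k) gchoose k \<noteq> 0"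
    and hd2: "\<And>k. k \<le> n \<Longrightarrow> (x - 1/2 + of_nat n + of_nat k) gchoose k \<noteq> 0"
    and hd3: "\<And>k. k \<le> n \<Longrightarrow> 1 + 2 * x + 2 * of_nat n + 2 * of_nat k \<noteq> 0"
  shows "(\<Sum>k=0..n. (-1)^k * of_nat (n choose k)
            * (((x / 2 + of_nat k) gchoose k)^2 * ((x - 1/2 + of_nat k) gchoose k))
            / ((((x - 1) / 2 + of_nat k) gchoose k)^2 * ((x - 1/2 + of_nat n + of_nat k) gchoose k))
            * ((1 + 2 * x + 4 * of_nat k) / (1 + 2 * x + 2 * of_nat n + 2 * of_nat k))
            * (H (2 * k) x)^2)
         = 1/4 * (((x - 1/2 + of_nat n) gchoose n) * ((-3/2 + of_nat n) gchoose n))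
             / ((((x - 1) / 2 + of_nat n) gchoose n)^2)
           * ((H n ((x - 1) / 2) - H n (-3/2))^2 - H2 n (-3/2))"
proof (cases "Im x = 0")
  case False
  thus ?thesis by (rule main_nonreal)
next
  case True
  define f where "f = (\<lambda>z. \<Sum>k=0..n. (-1)^k * of_nat (n choose k)
            * (((z / 2 + of_nat k) gchoose k)^2 * ((z - 1/2 + of_nat k) gchoose k))
            / ((((z - 1) / 2 + of_nat k) gchoose k)^2 * ((z - 1/2 + of_nat n + of_nat k) gchoose k))
            * ((1 + 2 * z + 4 * of_nat k) / (1 + 2 * z + 2 * of_nat n + 2 * of_nat k))
            * (H (2 * k) z)^2)"
  define g where "g = (\<lambda>z. 1/4 * (((z - 1/2 + of_nat n) gchoose n) * ((-3/2 + of_nat n) gchoose n))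
             / ((((z - 1) / 2 + of_nat n) gchoose n)^2)
           * ((H n ((z - 1) / 2) - H n (-3/2))^2 - H2 n (-3/2)))"
  have cf: "isCont f x" unfolding f_def by (rule cont_lhs[OF hx hd1 hd2 hd3])
  have cg: "isCont g x" unfolding g_def by (rule cont_rhs[OF hx2 hd1])
  define zs where "zs = (\<lambda>j::nat. x + \<i> * complex_of_real (inverse (real (Suc j))))"
  have l1: "(\<lambda>j. complex_of_real (inverse (real (Suc j)))) \<longlonglongrightarrow> complex_of_real 0"
    by (rule tendsto_of_real[OF LIMSEQ_inverse_real_of_nat])
  have l2: "(\<lambda>j. \<i> * complex_of_real (inverse (real (Suc j)))) \<longlonglongrightarrow> \<i> * complex_of_real 0"
    by (intro tendsto_mult l1 tendsto_const)
  have "zs \<longlonglongrightarrow> x + \<i> * complex_of_real 0"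
    unfolding zs_def by (intro tendsto_add l2 tendsto_const)
  hence lz: "zs \<longlonglongrightarrow> x" by simp
  have eq: "\<And>j. f (zs j) = g (zs j)"
  proof -
    fix j
    have "Im (zs j) \<noteq> 0" using True unfolding zs_def by (simp add: power2_eq_square)
    thus "f (zs j) = g (zs j)" unfolding f_def g_def by (rule main_nonreal)
  qed
  have lf: "(\<lambda>j. f (zs j)) \<longlonglongrightarrow> f x" by (rule isCont_tendsto_compose[OF cf lz])
  have lg: "(\<lambda>j. f (zs j)) \<longlonglongrightarrow> g x" unfolding eq by (rule isCont_tendsto_compose[OF cg lz])
  have "f x = g x" using lf lg by (rule LIMSEQ_unique)
  thus ?thesis unfolding f_def g_def .
qed

end
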